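(* Assume the setting described in the context and suppose the event $\mathcal{E}$ holds. There is an absolute constant $C>0$ such that for any $\gamma\in(0,1)$, if $$ m\ \ge\ C\frac{(1+\theta)^2}{\theta^2(1-\gamma)^2}s^2(1)\log n, $$ then the set $S^{(1)}=\{j^\ast\}$, where $j^\ast$ maximizes $|\hat{\boldsymbol{\Gamma}}_{jj}|$ over $j\in[n]$, satisfies $$ \|\mathbf{v}_{S^{(1)}}\|_2\ \ge\ \sqrt{\frac{\gamma}{s(1)}}. $$
   Context: Let $n\ge 2$, $m\ge1$, $\theta>0$, $k\in[n]$; $\mathbf{v}\in\mathbb{R}^n$ a unit vector with at most $k$ nonzero entries; $\mathbf{x}_1,\dots,\mathbf{x}_m$ i.i.d. $\mathcal{N}(\mathbf{0},\mathbf{I}_n+\theta\mathbf{v}\mathbf{v}^\top)$; $\hat{\boldsymbol{\Gamma}}=\frac1m\sum_i\mathbf{x}_i\mathbf{x}_i^\top-\mathbf{I}_n$; $\mathbf{W}=\hat{\boldsymbol{\Gamma}}-\theta\mathbf{v}\mathbf{v}^\top$. $\mathbf{v}_S$ is the restriction of $\mathbf{v}$ to $S$, $\mathbf{W}_{S,S}$ a principal submatrix, $\|\cdot\|_2$ Euclidean/spectral norm. $v_{(1)}\ge v_{(2)}\ge\cdots$ are the sorted absolute entries of $\mathbf{v}$ and $s(p)=(\sum_{i=1}^pv_{(i)}^2)^{-1}$; in particular $s(1)=v_{(1)}^{-2}$. Fix an absolute constant $C_0>0$; $\mathcal{E}$ is the event that $\|\mathbf{W}_{S,S}\|_2\le C_0(1+\theta)\sqrt{|S|\log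 n/m}$ for all nonempty $S\subseteq[n]$. Absolute constants do not depend on $n,m,k,\theta,\mathbf{v},\gamma$. *)

theory Defs
  imports "HOL-Analysis.Analysis"
begin

text \<open>Conventions: [n] is rendered as the index set {..<n}. Vectors in R^n are
  functions nat => real (only entries with index < n matter), n x n matrices are
  functions nat => nat => real, and the m samples are x :: nat => nat => real with
  x i the i-th sample (i < m), x i j its j-th coordinate (j < n).\<close>

definition Gamma_hat :: "nat \<Rightarrow> (nat \<Rightarrow> nat \<Rightarrow> real) \<Rightarrow> nat \<Rightarrow> nat \<Rightarrow> real" where
  "Gamma_hat m x j l = (1 / real m) * (\<Sum>i<m. x i j * x i l) - (if j = l then 1 else 0)"

definition W_mat :: "nat \<Rightarrow> (nat \<Rightarrow> nat \<Rightarrow> real) \<Rightarrow> real \<Rightarrow> (nat \<Rightarrow> real) \<Rightarrow> nat \<Rightarrow> nat \<Rightarrow> real" where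
  "W_mat m x \<theta> v j l = Gamma_hat m x j l - \<theta> * v j * v l"

definition sub_spec_norm :: "(nat \<Rightarrow> nat \<Rightarrow> real) \<Rightarrow> nat set \<Rightarrow> real" where
  "sub_spec_norm A S = Sup {sqrt (\<Sum>i\<in>S. (\<Sum>j\<in>S. A i j * u j)^2) | u. (\<Sum>j\<in>S. (u j)^2) = 1}"

definition restr_norm :: "(nat \<Rightarrow> real) \<Rightarrow> nat set \<Rightarrow> real" where
  "restr_norm v S = sqrt (\<Sum>j\<in>S. (v j)^2)"

text \<open>Sorted absolute entries v_(1) >= v_(2) >= ... (list index 0 is v_(1)).\<close>
definition sorted_abs :: "nat \<Rightarrow> (nat \<Rightarrow> real) \<Rightarrow> real list" where
  "sorted_abs n v = rev (sort (map (\<lambda>i. \<bar>v i\<bar>) [0..<n]))"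

definition s_fun :: "nat \<Rightarrow> (nat \<Rightarrow> real) \<Rightarrow> nat \<Rightarrow> real" where
  "s_fun n v p = 1 / (\<Sum>i<p. (sorted_abs n v ! i)^2)"

definition event_E :: "real \<Rightarrow> nat \<Rightarrow> nat \<Rightarrow> real \<Rightarrow> (nat \<Rightarrow> real) \<Rightarrow> (nat \<Rightarrow> nat \<Rightarrow> real) \<Rightarrow> bool" where
  "event_E C0 n m \<theta> v x \<longleftrightarrow>
     (\<forall>S. S \<subseteq> {..<n} \<and> S \<noteq> {} \<longrightarrow>
        sub_spec_norm (W_mat m x \<theta> v) S \<le> C0 * (1 + \<theta>) * sqrt (real (card S) * ln (real n) / real m))"

end

theory Submission
  imports Defs
begin

lemma spec_single: "sub_spec_norm A {j} = \<bar>A j j\<bar>"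
proof -
  have "{sqrt (\<Sum>i\<in>{j}. (\<Sum>l\<in>{j}. A i l * u l)^2) | u. (\<Sum>l\<in>{j}. (u l)^2) = (1::real)} = {\<bar>A j j\<bar>}"
  proof (rule set_eqI, rule iffI)
    fix z assume "z \<in> {sqrt (\<Sum>i\<in>{j}. (\<Sum>l\<in>{j}. A i l * u l)^2) | u. (\<Sum>l\<in>{j}. (u l)^2) = (1::real)}"
    then obtain u where u: "(u j)^2 = 1" "z = sqrt ((A j j * u j)^2)" by auto
    have "\<bar>u j\<bar> = 1" using u(1) by (metis abs_power2 power2_eq_1_iff abs_1 abs_neg_one)
    then show "z \<in> {\<bar>A j j\<bar>}" using u(2) by (simp add: abs_mult)
  next
    fix z assume "z \<in> {\<bar>A j j\<bar>}"
    then show "z \<in> {sqrt (\<Sum>i\<in>{j}. (\<Sum>l\<in>{j}. A i l * u l)^2) | u. (\<Sum>l\<in>{j}. (u l)^2) = (1::real)}"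
      by (auto intro!: exI[of _ "\<lambda>_. 1"])
  qed
  then show ?thesis unfolding sub_spec_norm_def by simp
qed

theorem proposition3:
  fixes C0 :: real
  assumes "C0 > 0"
  shows "\<exists>C>0. \<forall>(n::nat) (m::nat) (\<theta>::real) (k::nat) (v::nat \<Rightarrow> real)
            (x::nat \<Rightarrow> nat \<Rightarrow> real) (\<gamma>::real) (jstar::nat).
     n \<ge> 2 \<longrightarrow> m \<ge> 1 \<longrightarrow> \<theta> > 0 \<longrightarrow> 1 \<le> k \<longrightarrow> k \<le> n \<longrightarrow>
     (\<Sum>i<n. (v i)^2) = 1 \<longrightarrow> card {i. i < n \<and> v i \<noteq> 0} \<le> k \<longrightarrow>
     event_E C0 n m \<theta> v x \<longrightarrow>
     0 < \<gamma> \<longrightarrow> \<gamma> < 1 \<longrightarrow>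
     real m \<ge> C * (1 + \<theta>)^2 / (\<theta>^2 * (1 - \<gamma>)^2) * (s_fun n v 1)^2 * ln (real n) \<longrightarrow>
     jstar < n \<longrightarrow> (\<forall>j<n. \<bar>Gamma_hat m x j j\<bar> \<le> \<bar>Gamma_hat m x jstar jstar\<bar>) \<longrightarrow>
     restr_norm v {jstar} \<ge> sqrt (\<gamma> / s_fun n v 1)"
proof (rule exI[of _ "4 * C0^2"], intro conjI allI impI)
  show "0 < 4 * C0^2" using assms by simp
  fix n m :: nat and \<theta> :: real and k :: nat and v :: "nat \<Rightarrow> real" and x and \<gamma> :: real and jstar :: nat
  assume n2: "n \<ge> 2" and m1: "m \<ge> 1" and th: "\<theta> > 0" and E: "event_E C0 n m \<theta> v x"
    and g0: "0 < \<gamma>" and g1: "\<gamma> < 1"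
    and mbig: "real m \<ge> 4 * C0^2 * (1 + \<theta>)^2 / (\<theta>^2 * (1 - \<gamma>)^2) * (s_fun n v 1)^2 * ln (real n)"
    and js: "jstar < n" and jmax: "\<forall>j<n. \<bar>Gamma_hat m x j j\<bar> \<le> \<bar>Gamma_hat m x jstar jstar\<bar>"
  define b where "b = sorted_abs n v ! 0"
  define a where "a = b^2"
  have s1: "s_fun n v 1 = 1 / a" unfolding s_fun_def a_def b_def by simp
  have "b \<in> set (sorted_abs n v)" unfolding b_def sorted_abs_def using n2 by (intro nth_mem) simp
  then obtain i0 where i0: "i0 < n" "b = \<bar>v i0\<bar>" unfolding sorted_abs_def by auto
  have a_eq: "a = (v i0)^2" using i0 unfolding a_def by simp
  define L where "L = ln (real n)"
  have Lpos: "L > 0" unfolding L_def using n2 by simp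
  define eps where "eps = C0 * (1 + \<theta>) * sqrt (L / real m)"
  have Wb: "\<bar>W_mat m x \<theta> v j j\<bar> \<le> eps" if "j < n" for j
    using E that unfolding event_E_def eps_def L_def
    by (metis (no_types, lifting) spec_single card_1_singletonE card.insert card.empty empty_subsetI
        insert_not_empty insert_subset lessThan_iff mult_1 of_nat_1 is_singletonI is_singleton_altdef
        finite.emptyI empty_iff One_nat_def Suc_eq_plus1 add_0)
  have G: "Gamma_hat m x j j = \<theta> * (v j)^2 + W_mat m x \<theta> v j j" for j
    unfolding W_mat_def by (simp add: power2_eq_square)
  have "\<theta> * a - eps \<le> \<bar>Gamma_hat m x i0 i0\<bar>"
    using Wb[OF i0(1)] G[of i0] a_eq by (simp add: abs_le_iff) linarith
  also have "\<dots> \<le> \<bar>Gamma_hat m x jstar jstar\<bar>" using jmax i0 by auto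
  also have "\<dots> \<le> \<theta> * (v jstar)^2 + eps"
    using Wb[OF js] G[of jstar] th by (simp add: abs_le_iff) (smt (verit) zero_le_power2 mult_nonneg_nonneg)
  finally have key: "\<theta> * a - 2 * eps \<le> \<theta> * (v jstar)^2" by simp
  show "restr_norm v {jstar} \<ge> sqrt (\<gamma> / s_fun n v 1)"
  proof (cases "a = 0")
    case True then have "s_fun n v 1 = 0" using s1 by simp
    then show ?thesis by (simp add: restr_norm_def)
  next
    case False
    then have apos: "a > 0" unfolding a_def by simp
    define D where "D = \<theta>^2 * (1 - \<gamma>)^2 * a^2"
    have Dpos: "D > 0" unfolding D_def using apos th g1 by simp
    have "real m \<ge> 4 * C0^2 * (1 + \<theta>)^2 * L / D"
      using mbig unfolding s1 D_def L_def by (simp add: field_simps power2_eq_square)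
    then have mD: "real m * D \<ge> 4 * C0^2 * (1 + \<theta>)^2 * L"
      using Dpos by (simp add: field_simps)
    have "(2 * eps)^2 = 4 * C0^2 * (1 + \<theta>)^2 * L / real m"
    proof -
      have "(2 * eps)^2 = 4 * C0^2 * (1 + \<theta>)^2 * (sqrt (L / real m))^2"
        unfolding eps_def by algebra
      also have "\<dots> = 4 * C0^2 * (1 + \<theta>)^2 * L / real m" using Lpos m1 by simp
      finally show ?thesis .
    qed
    also have "\<dots> \<le> D" using mD m1 by (simp add: field_simps)
    finally have "(2*eps)^2 \<le> (\<theta> * (1 - \<gamma>) * a)^2" unfolding D_def by (simp add: power_mult_distrib)
    moreover have "0 \<le> \<theta> * (1 - \<gamma>) * a" using th g1 apos by simp
    ultimately have "2 * eps \<le> \<theta> * (1 - \<gamma>) * a"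
      by (rule power2_le_imp_le)
    then have "\<theta> * (\<gamma> * a) \<le> \<theta> * (v jstar)^2" using key by (simp add: algebra_simps)
    then have "\<gamma> * a \<le> (v jstar)^2" using th by simp
    then have "sqrt (\<gamma> * a) \<le> sqrt ((v jstar)^2)" by (rule real_sqrt_le_mono)
    moreover have "\<gamma> / s_fun n v 1 = \<gamma> * a" unfolding s1 by simp
    ultimately show ?thesis unfolding restr_norm_def by simp
  qed
qed

end
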